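(* Let $0\le k<\infty$, let $M$ be a $C^k$ manifold, $\mathbb F\in\{\mathbb R,\mathbb C\}$, and let $f\in C^k(M,\mathbb F)$ with $f(x_0)=0$ for some $x_0\in M$. Then there exists $h\in C^k(M,\mathbb F)$ with $Z(h)=\{x_0\}$ such that $f^{4k+4}$ is divisible by $h$ in $C^k(M,\mathbb F)$, i.e. there exists $q\in C^k(M,\mathbb F)$ with $f^{4k+4}=hq$.
   Context: Manifolds are Hausdorff and second countable. $Z(h)=\{x\in M:h(x)=0\}$. *)

theory Defs
  imports "HOL-Analysis.Analysis"
begin

fun Ck_on :: "nat \<Rightarrow> 'e::euclidean_space set \<Rightarrow> ('e \<Rightarrow> 'b::real_normed_vector) \<Rightarrow> bool" where
  "Ck_on 0 U f = continuous_on U f"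
| "Ck_on (Suc k) U f =
     ((\<forall>x\<in>U. f differentiable (at x)) \<and>
      (\<forall>i\<in>Basis. Ck_on k U (\<lambda>x. frechet_derivative f (at x) i)))"

definition chart :: "'m topology \<Rightarrow> 'm set \<Rightarrow> ('m \<Rightarrow> 'e::euclidean_space) \<Rightarrow> bool" where
  "chart X U \<phi> \<longleftrightarrow> openin X U \<and> open (\<phi> ` U) \<and>
     homeomorphic_map (subtopology X U) (top_of_set (\<phi> ` U)) \<phi>"

definition Ck_atlas :: "nat \<Rightarrow> 'm topology \<Rightarrow> ('m set \<times> ('m \<Rightarrow> 'e::euclidean_space)) set \<Rightarrow> bool" where
  "Ck_atlas k X A \<longleftrightarrow>
     (\<forall>(U, \<phi>)\<in>A. chart X U \<phi>) \<and>
     (\<Union>(U, \<phi>)\<in>A. U) = topspace X \<and>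
     (\<forall>(U, \<phi>)\<in>A. \<forall>(V, \<psi>)\<in>A.
        Ck_on k (\<phi> ` (U \<inter> V)) (\<psi> \<circ> inv_into U \<phi>))"

definition Ck_manifold :: "nat \<Rightarrow> 'm topology \<Rightarrow> ('m set \<times> ('m \<Rightarrow> 'e::euclidean_space)) set \<Rightarrow> bool" where
  "Ck_manifold k X A \<longleftrightarrow> Hausdorff_space X \<and> second_countable X \<and> Ck_atlas k X A"

definition Ck_fun :: "nat \<Rightarrow> 'm topology \<Rightarrow> ('m set \<times> ('m \<Rightarrow> 'e::euclidean_space)) set
     \<Rightarrow> ('m \<Rightarrow> 'b::real_normed_vector) \<Rightarrow> bool" where
  "Ck_fun k X A f \<longleftrightarrow> (\<forall>(U, \<phi>)\<in>A. Ck_on k (\<phi> ` U) (f \<circ> inv_into U \<phi>))"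

definition zero_set :: "'m topology \<Rightarrow> ('m \<Rightarrow> 'b::zero) \<Rightarrow> 'm set" where
  "zero_set X h = {x \<in> topspace X. h x = 0}"

end

theory Submission
  imports Defs
begin


lemma fd_eq: "(f has_derivative f') (at x) \<Longrightarrow> frechet_derivative f (at x) = f'"
  using frechet_derivative_at by metis

lemma Ck_on_cong:
  assumes "open U" "\<And>x. x\<in>U \<Longrightarrow> f x = g x" "Ck_on k U f"
  shows "Ck_on k U g"
  using assms
proof (induction k arbitrary: f g)
  case 0
  then show ?case using continuous_on_cong by fastforce
next
  case (Suc k)
  have D: "(g has_derivative frechet_derivative f (at x)) (at x)" if "x \<in> U" for x
  proof -
    from Suc.prems(3) that have "f differentiable (at x)" by simp
    then have "(f has_derivative frechet_derivative f (at x)) (at x)"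
      using frechet_derivative_works by blast
    then show ?thesis
      by (rule has_derivative_transform_within_open[OF _ \<open>open U\<close> that]) (use Suc.prems(2) in auto)
  qed
  have E: "frechet_derivative g (at x) = frechet_derivative f (at x)" if "x \<in> U" for x
    using fd_eq[OF D[OF that]] .
  show ?case
    using Suc.prems D E
    by (auto simp: differentiable_def intro: Suc.IH[OF \<open>open U\<close>, rotated])
qed

lemma Ck_on_local:
  assumes "\<And>x. x\<in>S \<Longrightarrow> \<exists>W. open W \<and> x\<in>W \<and> W\<subseteq>S \<and> Ck_on k W f"
  shows "Ck_on k S f"
  using assms
proof (induction k arbitrary: f)
  case 0
  show ?case
    unfolding Ck_on.simps continuous_on_eq_continuous_within
  proof
    fix x assume "x \<in> S"
    then obtain W where W: "open W" "x\<in>W" "W\<subseteq>S" "continuous_on W f" using 0 by force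
    then have "isCont f x" using continuous_on_eq_continuous_at by blast
    then show "continuous (at x within S) f" using continuous_at_imp_continuous_within by blast
  qed
next
  case (Suc k)
  show ?case
    apply simp
  proof (intro conjI ballI)
    fix x assume "x \<in> S"
    then show "f differentiable at x" using Suc.prems by force
  next
    fix i :: 'a assume "i \<in> Basis"
    show "Ck_on k S (\<lambda>x. frechet_derivative f (at x) i)"
      apply (rule Suc.IH)
      using Suc.prems \<open>i \<in> Basis\<close> by (metis Ck_on.simps(2))
  qed
qed

lemma Ck_on_subset: "Ck_on k S f \<Longrightarrow> T \<subseteq> S \<Longrightarrow> Ck_on k T f"
  by (induction k arbitrary: f) (auto intro: continuous_on_subset)

lemma Ck_on_mono: "Ck_on (Suc k) U f \<Longrightarrow> Ck_on k U f"
proof (induction k arbitrary: f)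
  case 0
  then have "\<forall>x\<in>U. isCont f x"
    by (auto intro: differentiable_imp_continuous_within)
  then show ?case
    by (simp add: continuous_at_imp_continuous_on)
next
  case (Suc k)
  then show ?case by simp
qed

lemma Ck_on_const: "Ck_on k U (\<lambda>x. c)"
proof (induction k arbitrary: c)
  case 0 then show ?case by simp
next
  case (Suc k)
  have "frechet_derivative (\<lambda>x. c) (at x) = (\<lambda>h. 0)" for x
    by (rule fd_eq) (rule has_derivative_const)
  then show ?case using Suc by simp
qed

lemma Ck_on_id: "Ck_on k U (\<lambda>x. x)"
proof (cases k)
  case 0 then show ?thesis by simp
next
  case (Suc n)
  have "frechet_derivative (\<lambda>x. x) (at x) = (\<lambda>h. h)" for x :: 'a
    by (rule fd_eq) (rule has_derivative_ident)
  then show ?thesis using Suc by (simp add: Ck_on_const)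
qed

lemma Ck_on_add:
  assumes "open U" "Ck_on k U f" "Ck_on k U g"
  shows "Ck_on k U (\<lambda>x. f x + g x)"
  using assms
proof (induction k arbitrary: f g)
  case 0 then show ?case by (simp add: continuous_on_add)
next
  case (Suc k)
  have D: "((\<lambda>x. f x + g x) has_derivative (\<lambda>h. frechet_derivative f (at x) h + frechet_derivative g (at x) h)) (at x)"
    if "x\<in>U" for x
    using Suc.prems that by (intro has_derivative_add) (auto simp: frechet_derivative_works[symmetric])
  show ?case
    apply (simp add: differentiable_def)
    apply (intro conjI ballI)
    using D apply blast
    apply (rule Ck_on_cong[OF \<open>open U\<close>, where f="\<lambda>x. frechet_derivative f (at x) _ + frechet_derivative g (at x) _"])
     apply (simp add: fd_eq[OF D])
    using Suc by simp
qed

lemma Ck_on_linear: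
  assumes "bounded_linear L" "open U" "Ck_on k U f"
  shows "Ck_on k U (\<lambda>x. L (f x))"
  using assms(2,3)
proof (induction k arbitrary: f)
  case 0 then show ?case
    using assms(1) by (simp add: bounded_linear.continuous_on)
next
  case (Suc k)
  have D: "((\<lambda>x. L (f x)) has_derivative (\<lambda>h. L (frechet_derivative f (at x) h))) (at x)"
    if "x\<in>U" for x
    using Suc.prems that by (intro bounded_linear.has_derivative[OF assms(1)]) (auto simp: frechet_derivative_works[symmetric])
  show ?case
    apply (simp add: differentiable_def)
    apply (intro conjI ballI)
    using D apply blast
    apply (rule Ck_on_cong[OF \<open>open U\<close>, where f="\<lambda>x. L (frechet_derivative f (at x) _)"])
     apply (simp add: fd_eq[OF D])
    using Suc by simp
qed

lemma Ck_on_bilinear: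
  assumes "bounded_bilinear pr" "open U" "Ck_on k U f" "Ck_on k U g"
  shows "Ck_on k U (\<lambda>x. pr (f x) (g x))"
  using assms(2-)
proof (induction k arbitrary: f g)
  case 0 then show ?case
    using bounded_bilinear.continuous_on[OF assms(1)] by simp
next
  case (Suc k)
  have D: "((\<lambda>x. pr (f x) (g x)) has_derivative
     (\<lambda>h. pr (f x) (frechet_derivative g (at x) h) + pr (frechet_derivative f (at x) h) (g x))) (at x)"
    if "x\<in>U" for x
    using Suc.prems that by (intro bounded_bilinear.FDERIV[OF assms(1)]) (auto simp: frechet_derivative_works[symmetric])
  show ?case
    apply (simp add: differentiable_def)
    apply (intro conjI ballI)
    using D apply blast
    apply (rule Ck_on_cong[OF \<open>open U\<close>, where f="\<lambda>x. pr (f x) (frechet_derivative g (at x) _) + pr (frechet_derivative f (at x) _) (g x)"])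
     apply (simp add: fd_eq[OF D])
    apply (rule Ck_on_add[OF \<open>open U\<close>])
    using Suc.prems Ck_on_mono[OF Suc.prems(2)] Ck_on_mono[OF Suc.prems(3)]
    by (auto intro!: Suc.IH)
qed

lemma Ck_on_pair:
  assumes "open U" "Ck_on k U f" "Ck_on k U g"
  shows "Ck_on k U (\<lambda>x. (f x, g x))"
  using assms
proof (induction k arbitrary: f g)
  case 0 then show ?case by (simp add: continuous_on_Pair)
next
  case (Suc k)
  have D: "((\<lambda>x. (f x, g x)) has_derivative (\<lambda>h. (frechet_derivative f (at x) h, frechet_derivative g (at x) h))) (at x)"
    if "x\<in>U" for x
    using Suc.prems that by (intro has_derivative_Pair) (auto simp: frechet_derivative_works[symmetric])
  show ?case
    apply (simp add: differentiable_def)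
    apply (intro conjI ballI)
    using D apply blast
    apply (rule Ck_on_cong[OF \<open>open U\<close>, where f="\<lambda>x. (frechet_derivative f (at x) _, frechet_derivative g (at x) _)"])
     apply (simp add: fd_eq[OF D])
    using Suc by simp
qed

lemma Ck_on_sum:
  assumes "open U" "finite I" "\<And>j. j\<in>I \<Longrightarrow> Ck_on k U (f j)"
  shows "Ck_on k U (\<lambda>x. \<Sum>j\<in>I. f j x)"
  using assms(2,3)
proof (induction I rule: finite_induct)
  case empty then show ?case by (simp add: Ck_on_const)
next
  case (insert a F)
  then show ?case by (simp add: Ck_on_add[OF assms(1)])
qed

lemma Ck_on_compose:
  fixes \<Phi> :: "'a::euclidean_space \<Rightarrow> 'c::real_normed_vector" and T :: "'e::euclidean_space \<Rightarrow> 'a"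
  assumes "Ck_on k UNIV \<Phi>" "open U" "Ck_on k U T"
  shows "Ck_on k U (\<lambda>x. \<Phi> (T x))"
  using assms(1,3)
proof (induction k arbitrary: \<Phi> T)
  case 0 then show ?case
    using continuous_on_compose2[of UNIV \<Phi> U T] by auto
next
  case (Suc k)
  have D: "((\<lambda>x. \<Phi> (T x)) has_derivative (\<lambda>h. frechet_derivative \<Phi> (at (T x)) (frechet_derivative T (at x) h))) (at x)"
    if "x\<in>U" for x
  proof -
    have "(T has_derivative frechet_derivative T (at x)) (at x)"
      using Suc.prems that by (simp add: frechet_derivative_works[symmetric])
    moreover have "(\<Phi> has_derivative frechet_derivative \<Phi> (at (T x))) (at (T x))"
      using Suc.prems by (simp add: frechet_derivative_works[symmetric])
    ultimately show ?thesis using diff_chain_at[of T _ x \<Phi>] by (simp add: o_def)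
  qed
  have E: "frechet_derivative \<Phi> (at (T x)) (frechet_derivative T (at x) i) =
     (\<Sum>j\<in>Basis. (frechet_derivative T (at x) i \<bullet> j) *\<^sub>R frechet_derivative \<Phi> (at (T x)) j)" for x i
  proof (cases "\<Phi> differentiable at (T x)")
    case True
    then have lin: "linear (frechet_derivative \<Phi> (at (T x)))" by (rule linear_frechet_derivative)
    have "frechet_derivative \<Phi> (at (T x)) (frechet_derivative T (at x) i) =
        frechet_derivative \<Phi> (at (T x)) (\<Sum>j\<in>Basis. (frechet_derivative T (at x) i \<bullet> j) *\<^sub>R j)"
      by (simp add: euclidean_representation)
    also have "\<dots> = (\<Sum>j\<in>Basis. (frechet_derivative T (at x) i \<bullet> j) *\<^sub>R frechet_derivative \<Phi> (at (T x)) j)"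
      using lin by (simp add: linear_sum o_def linear_cmul)
    finally show ?thesis .
  next
    case False then show ?thesis using Suc.prems by simp
  qed
  show ?case
    apply (simp add: differentiable_def)
    apply (intro conjI ballI)
    using D apply blast
    apply (rule Ck_on_cong[OF \<open>open U\<close>, where f="\<lambda>x. (\<Sum>j\<in>Basis. (frechet_derivative T (at x) _ \<bullet> j) *\<^sub>R frechet_derivative \<Phi> (at (T x)) j)"])
     apply (simp add: fd_eq[OF D] E)
    apply (rule Ck_on_sum[OF \<open>open U\<close> finite_Basis])
    apply (rule Ck_on_bilinear[OF bounded_bilinear_scaleR \<open>open U\<close>])
    subgoal for i j
      using Suc.prems by (intro Ck_on_linear[OF bounded_linear_inner_left \<open>open U\<close>]) simp
    subgoal for i j
      using Suc.prems Ck_on_mono[OF Suc.prems(2)] by (intro Suc.IH) simp_all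
    done
qed



inductive hpoly :: "nat \<Rightarrow> ('a::euclidean_space \<Rightarrow> 'b::real_normed_field) \<Rightarrow> bool" where
  hz: "hpoly n (\<lambda>x. 0)"
| hc: "hpoly 0 (\<lambda>x. c)"
| hl: "bounded_linear L \<Longrightarrow> hpoly 1 L"
| hs: "hpoly 2 (\<lambda>x. of_real (x \<bullet> x))"
| ha: "hpoly n P \<Longrightarrow> hpoly n Q \<Longrightarrow> hpoly n (\<lambda>x. P x + Q x)"
| hm: "hpoly a P \<Longrightarrow> hpoly b Q \<Longrightarrow> hpoly (a+b) (\<lambda>x. P x * Q x)"

lemma hpoly_bound: "hpoly e P \<Longrightarrow> \<exists>C\<ge>0. \<forall>x. norm (P x) \<le> C * norm x ^ e"
proof (induction rule: hpoly.induct)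
  case (hz n) then show ?case by auto
next
  case (hc c) then show ?case by (intro exI[of _ "norm c"]) auto
next
  case (hl L)
  then obtain K where "K > 0" "\<And>x. norm (L x) \<le> norm x * K"
    using bounded_linear.pos_bounded by blast
  then show ?case by (intro exI[of _ K]) (auto simp: mult.commute)
next
  case hs
  show ?case by (intro exI[of _ 1]) (simp add: power2_norm_eq_inner[symmetric] norm_power)
next
  case (ha n P Q)
  then obtain C1 C2 where C: "C1\<ge>0" "C2\<ge>0" "\<forall>x. norm (P x) \<le> C1 * norm x ^ n" "\<forall>x. norm (Q x) \<le> C2 * norm x ^ n"
    by blast
  have "norm (P x + Q x) \<le> (C1 + C2) * norm x ^ n" for x
  proof -
    have "norm (P x + Q x) \<le> norm (P x) + norm (Q x)" by (rule norm_triangle_ineq)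
    also have "\<dots> \<le> C1 * norm x ^ n + C2 * norm x ^ n" using C by (intro add_mono) auto
    finally show ?thesis by (simp add: distrib_right)
  qed
  then show ?case using C by (intro exI[of _ "C1+C2"]) auto
next
  case (hm a P b Q)
  then obtain C1 C2 where C: "C1\<ge>0" "C2\<ge>0" "\<forall>x. norm (P x) \<le> C1 * norm x ^ a" "\<forall>x. norm (Q x) \<le> C2 * norm x ^ b"
    by blast
  have "norm (P x * Q x) \<le> (C1 * C2) * norm x ^ (a + b)" for x
  proof -
    have "norm (P x * Q x) = norm (P x) * norm (Q x)" by (rule norm_mult)
    also have "\<dots> \<le> (C1 * norm x ^ a) * (C2 * norm x ^ b)" using C by (intro mult_mono) auto
    finally show ?thesis by (simp add: power_add mult_ac)
  qed
  then show ?case using C by (intro exI[of _ "C1*C2"]) auto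
qed

lemma hpoly_const0: "hpoly e P \<Longrightarrow> e = 0 \<Longrightarrow> \<exists>c. P = (\<lambda>x. c)"
proof (induction rule: hpoly.induct)
  case (ha n P Q) then show ?case by auto
next
  case (hm a P b Q) then show ?case by auto
qed auto

lemma hpoly_deriv:
  "hpoly e P \<Longrightarrow> (\<forall>x. P differentiable at x) \<and>
      (\<forall>v. \<exists>P'. hpoly (e - 1) P' \<and> (\<forall>x. frechet_derivative P (at x) v = P' x))"
proof (induction rule: hpoly.induct)
  case (hz n)
  have "frechet_derivative (\<lambda>x. 0::'b) (at x) = (\<lambda>h. 0)" for x :: 'a
    by (rule fd_eq) (rule has_derivative_const)
  then show ?case by (auto intro: hpoly.hz)
next
  case (hc c)
  have "frechet_derivative (\<lambda>x::'a. c) (at x) = (\<lambda>h. 0)" for x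
    by (rule fd_eq) (rule has_derivative_const)
  then show ?case by (auto intro: hpoly.hz)
next
  case (hl L)
  have D: "(L has_derivative L) (at x)" for x
    using hl bounded_linear_imp_has_derivative by blast
  then have "frechet_derivative L (at x) = L" for x by (rule fd_eq)
  then show ?case using D by (auto simp: differentiable_def intro!: hpoly.hc)
next
  case hs
  have D: "((\<lambda>x::'a. of_real (x \<bullet> x)::'b) has_derivative (\<lambda>h. of_real (x \<bullet> h + h \<bullet> x))) (at x)" for x
    by (intro bounded_linear.has_derivative[OF bounded_linear_of_real] has_derivative_inner has_derivative_ident)
  have E: "frechet_derivative (\<lambda>x::'a. of_real (x \<bullet> x)::'b) (at x) v = of_real 2 * of_real (x \<bullet> v)" for x v
    by (simp add: fd_eq[OF D] inner_commute)
  have "hpoly (0+1) (\<lambda>x::'a. (of_real 2::'b) * of_real (x \<bullet> v))" for v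
    by (intro hpoly.hm hpoly.hc hpoly.hl bounded_linear_compose[OF bounded_linear_of_real bounded_linear_inner_left])
  then show ?case using D E by (auto simp: differentiable_def)
next
  case (ha n P Q)
  show ?case
  proof (intro conjI allI)
    fix x show "(\<lambda>x. P x + Q x) differentiable at x" using ha by auto
  next
    fix v
    obtain P' Q' where "hpoly (n-1) P'" "hpoly (n-1) Q'" "\<forall>x. frechet_derivative P (at x) v = P' x"
       "\<forall>x. frechet_derivative Q (at x) v = Q' x" using ha by blast
    moreover have "frechet_derivative (\<lambda>x. P x + Q x) (at x) v = frechet_derivative P (at x) v + frechet_derivative Q (at x) v" for x
      using ha by (subst fd_eq[OF has_derivative_add]) (auto simp: frechet_derivative_works[symmetric])
    ultimately show "\<exists>P'. hpoly (n - 1) P' \<and> (\<forall>x. frechet_derivative (\<lambda>x. P x + Q x) (at x) v = P' x)"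
      by (intro exI[of _ "\<lambda>x. P' x + Q' x"]) (auto intro: hpoly.ha)
  qed
next
  case (hm a P b Q)
  show ?case
  proof (intro conjI allI)
    fix x show "(\<lambda>x. P x * Q x) differentiable at x" using hm by auto
  next
    fix v
    obtain P' Q' where H: "hpoly (a-1) P'" "hpoly (b-1) Q'" "\<forall>x. frechet_derivative P (at x) v = P' x"
       "\<forall>x. frechet_derivative Q (at x) v = Q' x" using hm by blast
    have F0: "frechet_derivative (\<lambda>x. P x * Q x) (at x) v = P x * frechet_derivative Q (at x) v + frechet_derivative P (at x) v * Q x" for x
      using hm by (subst fd_eq[OF has_derivative_mult]) (auto simp: frechet_derivative_works[symmetric])
    have F: "frechet_derivative (\<lambda>x. P x * Q x) (at x) v = P x * Q' x + P' x * Q x" for x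
      using F0 H by simp
    show "\<exists>P'. hpoly (a + b - 1) P' \<and> (\<forall>x. frechet_derivative (\<lambda>x. P x * Q x) (at x) v = P' x)"
    proof (cases "a = 0")
      case True
      then obtain c where c: "P = (\<lambda>x. c)" using hpoly_const0 hm by blast
      have z: "P' x = 0" for x
        using H(3) c by (metis fd_eq[OF has_derivative_const])
      have "hpoly (0 + (b-1)) (\<lambda>x. c * Q' x)" by (rule hpoly.hm[OF hpoly.hc H(2)])
      then show ?thesis using F c True z
        by (intro exI[of _ "\<lambda>x. c * Q' x"]) simp
    next
      case a: False
      show ?thesis
      proof (cases "b = 0")
        case True
        then obtain c where c: "Q = (\<lambda>x. c)" using hpoly_const0 hm by blast
        have z: "Q' x = 0" for x
          using H(4) c by (metis fd_eq[OF has_derivative_const])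
        have "hpoly ((a-1) + 0) (\<lambda>x. P' x * c)" by (rule hpoly.hm[OF H(1) hpoly.hc])
        then show ?thesis using F c True z
          by (intro exI[of _ "\<lambda>x. P' x * c"]) simp
      next
        case False
        have "hpoly (a + (b-1)) (\<lambda>x. P x * Q' x)" using hm H by (intro hpoly.hm)
        moreover have "hpoly ((a-1) + b) (\<lambda>x. P' x * Q x)" using hm H by (intro hpoly.hm)
        ultimately have "hpoly (a + b - 1) (\<lambda>x. P x * Q' x + P' x * Q x)"
          using a False by (intro hpoly.ha) (auto simp: add.commute)
        then show ?thesis using F by auto
      qed
    qed
  qed
qed



lemma hpoly_Ck: "hpoly e P \<Longrightarrow> Ck_on k U P"
proof (induction k arbitrary: e P)
  case 0
  then have "\<forall>x\<in>U. isCont P x"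
    using hpoly_deriv by (blast intro: differentiable_imp_continuous_within)
  then show ?case by (simp add: continuous_at_imp_continuous_on)
next
  case (Suc k)
  have "\<forall>x\<in>U. P differentiable at x" using hpoly_deriv[OF Suc.prems] by blast
  moreover have "Ck_on k U (\<lambda>x. frechet_derivative P (at x) i)" for i
  proof -
    obtain P' where "hpoly (e-1) P'" "\<forall>x. frechet_derivative P (at x) i = P' x"
      using hpoly_deriv[OF Suc.prems] by blast
    then show ?thesis using Suc.IH by simp
  qed
  ultimately show ?case by simp
qed

definition rat :: "nat \<Rightarrow> ('a::euclidean_space \<Rightarrow> 'b::real_normed_field) \<Rightarrow> 'a \<Rightarrow> 'b" where
  "rat m P x = P x / of_real ((x \<bullet> x) ^ m)"

lemma rat_bound:
  assumes "hpoly e P" "0 < m" "2*m \<le> e"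
  shows "\<exists>C\<ge>0. \<forall>x. norm (rat m P x) \<le> C * norm x ^ (e - 2*m)"
proof -
  obtain C where C: "C \<ge> 0" "\<forall>x. norm (P x) \<le> C * norm x ^ e" using hpoly_bound[OF assms(1)] by blast
  have "norm (rat m P x) \<le> C * norm x ^ (e - 2*m)" for x
  proof (cases "x = 0")
    case True then show ?thesis using assms C by (simp add: rat_def power_0_left)
  next
    case False
    then have n: "norm x > 0" by simp
    have xx: "x \<bullet> x = norm x ^ 2" by (simp add: power2_norm_eq_inner)
    have d: "norm (of_real ((x \<bullet> x) ^ m) :: 'b) = norm x ^ (2*m)"
      by (simp only: norm_of_real) (simp add: xx power_mult)
    have "norm (rat m P x) = norm (P x) / norm x ^ (2*m)"
      by (simp only: rat_def norm_divide d)
    also have "\<dots> \<le> C * norm x ^ e / norm x ^ (2*m)"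
      using C n by (intro divide_right_mono) auto
    also have "\<dots> = C * norm x ^ (e - 2*m)"
      using n assms(3) by (simp add: power_diff)
    finally show ?thesis .
  qed
  then show ?thesis using C by blast
qed

lemma rat_cont0:
  assumes "hpoly e P" "0 < m" "2*m + 1 \<le> e"
  shows "isCont (rat m P) 0"
proof -
  obtain C where C: "C \<ge> 0" "\<forall>x. norm (rat m P x) \<le> C * norm x ^ (e - 2*m)"
    using rat_bound[OF assms(1,2)] assms(3) by fastforce
  have "((\<lambda>x::'a. C * norm x ^ (e - 2*m)) \<longlongrightarrow> C * norm (0::'a) ^ (e - 2*m)) (at 0)"
    by (intro tendsto_intros)
  then have "((\<lambda>x::'a. C * norm x ^ (e - 2*m)) \<longlongrightarrow> 0) (at 0)" using assms(3) by (simp add: power_0_left)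
  then have "(rat m P \<longlongrightarrow> 0) (at 0)"
    by (rule Lim_null_comparison[rotated]) (use C in auto)
  moreover have "rat m P 0 = 0" using assms by (simp add: rat_def power_0_left)
  ultimately show ?thesis by (simp add: isCont_def)
qed

lemma rat_deriv0:
  assumes "hpoly e P" "0 < m" "2*m + 2 \<le> e"
  shows "(rat m P has_derivative (\<lambda>h. 0)) (at 0)"
proof -
  obtain C where C: "C \<ge> 0" "\<forall>x. norm (rat m P x) \<le> C * norm x ^ (e - 2*m)"
    using rat_bound[OF assms(1,2)] assms(3) by fastforce
  have r0: "rat m P 0 = 0" using assms by (simp add: rat_def power_0_left)
  have "((\<lambda>x::'a. C * norm x ^ (e - 2*m - 1)) \<longlongrightarrow> C * norm (0::'a) ^ (e - 2*m - 1)) (at 0)"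
    by (intro tendsto_intros)
  then have L: "((\<lambda>x::'a. C * norm x ^ (e - 2*m - 1)) \<longlongrightarrow> 0) (at 0)" using assms(3) by (simp add: power_0_left)
  have "norm (norm (rat m P h) / norm h) \<le> C * norm h ^ (e - 2*m - 1)" if "h \<noteq> 0" for h
  proof -
    have n: "norm h > 0" using that by simp
    have "norm (norm (rat m P h) / norm h) = norm (rat m P h) / norm h" by simp
    also have "\<dots> \<le> C * norm h ^ (e - 2*m) / norm h" using C n by (intro divide_right_mono) auto
    also have "\<dots> = C * norm h ^ (e - 2*m - 1)"
      using n assms(3) by (simp add: power_diff)
    finally show ?thesis .
  qed
  then have "eventually (\<lambda>h. norm (norm (rat m P h) / norm h) \<le> C * norm h ^ (e - 2*m - 1)) (at (0::'a))"
    by (auto simp: eventually_at_filter)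
  then have "((\<lambda>h. norm (rat m P h) / norm h) \<longlongrightarrow> 0) (at 0)"
    by (rule Lim_null_comparison[OF _ L])
  then show ?thesis
    by (simp add: has_derivative_at r0)
qed

lemma rat_deriv:
  assumes "hpoly e P" "0 < m" "x \<noteq> 0"
  shows "(rat m P has_derivative (\<lambda>v. (frechet_derivative P (at x) v * of_real (x \<bullet> x)
      + (- of_real (2 * real m)) * of_real (x \<bullet> v) * P x) / of_real ((x \<bullet> x) ^ Suc m))) (at x)"
proof -
  have DP: "(P has_derivative frechet_derivative P (at x)) (at x)"
    using hpoly_deriv[OF assms(1)] frechet_derivative_works by blast
  have DI: "((\<lambda>y. (y \<bullet> y) ^ m) has_derivative (\<lambda>v. of_nat m * (x \<bullet> v + v \<bullet> x) * (x \<bullet> x) ^ (m - 1))) (at x)"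
    by (intro has_derivative_power has_derivative_inner has_derivative_ident)
  have DG: "((\<lambda>y. of_real ((y \<bullet> y) ^ m) :: 'b) has_derivative (\<lambda>v. of_real (of_nat m * (x \<bullet> v + v \<bullet> x) * (x \<bullet> x) ^ (m - 1)))) (at x)"
    by (rule bounded_linear.has_derivative[OF bounded_linear_of_real DI])
  have s: "x \<bullet> x > 0" using assms(3) by simp
  then have nz: "(of_real ((x \<bullet> x) ^ m) :: 'b) \<noteq> 0" by simp
  have D: "((\<lambda>y. P y / of_real ((y \<bullet> y) ^ m)) has_derivative
     (\<lambda>h. (frechet_derivative P (at x) h * of_real ((x \<bullet> x) ^ m) - P x * of_real (of_nat m * (x \<bullet> h + h \<bullet> x) * (x \<bullet> x) ^ (m - 1))) /
         (of_real ((x \<bullet> x) ^ m) * of_real ((x \<bullet> x) ^ m)))) (at x)"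
    by (rule has_derivative_divide'[OF DP DG nz])
  obtain m' where m': "m = Suc m'" using assms(2) gr0_implies_Suc by blast
  define r :: 'b where "r = of_real (x \<bullet> x)"
  have r: "r \<noteq> 0" using s by (simp add: r_def)
  have eq: "(frechet_derivative P (at x) h * of_real ((x \<bullet> x) ^ m) - P x * of_real (of_nat m * (x \<bullet> h + h \<bullet> x) * (x \<bullet> x) ^ (m - 1))) /
         (of_real ((x \<bullet> x) ^ m) * of_real ((x \<bullet> x) ^ m)) =
      (frechet_derivative P (at x) h * of_real (x \<bullet> x)
      + (- of_real (2 * real m)) * of_real (x \<bullet> h) * P x) / of_real ((x \<bullet> x) ^ Suc m)" for h
    unfolding m' of_real_mult of_real_power of_real_add r_def[symmetric] inner_commute[of h x]
    using r by (simp add: field_simps)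
  show ?thesis
    unfolding rat_def using D eq by simp
qed

lemma rat_Ck: "hpoly e P \<Longrightarrow> 0 < m \<Longrightarrow> 2*m + k + 1 \<le> e \<Longrightarrow> Ck_on k UNIV (rat m P)"
proof (induction k arbitrary: e P m)
  case 0
  have "isCont (rat m P) x" for x
  proof (cases "x = 0")
    case True then show ?thesis using rat_cont0 0 by simp
  next
    case False then show ?thesis
      using rat_deriv[OF 0(1,2) False] has_derivative_continuous by blast
  qed
  then show ?case by (simp add: continuous_at_imp_continuous_on)
next
  case (Suc k)
  have diff: "rat m P differentiable at x" for x
  proof (cases "x = 0")
    case True then show ?thesis using rat_deriv0[OF Suc.prems(1,2)] Suc.prems(3)
      by (auto simp: differentiable_def)
  next
    case False then show ?thesis
      using rat_deriv[OF Suc.prems(1,2) False] by (auto simp: differentiable_def)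
  qed
  have "Ck_on k UNIV (\<lambda>x. frechet_derivative (rat m P) (at x) i)" for i
  proof -
    obtain P' where P': "hpoly (e-1) P'" "\<forall>x. frechet_derivative P (at x) i = P' x"
      using hpoly_deriv[OF Suc.prems(1)] by blast
    define P2 where "P2 = (\<lambda>x. P' x * of_real (x \<bullet> x) + (- of_real (2 * real m)) * of_real (x \<bullet> i) * P x)"
    have e1: "1 \<le> e" using Suc.prems by simp
    have h1: "hpoly ((e - 1) + 2) (\<lambda>x. P' x * of_real (x \<bullet> x))"
      by (intro hpoly.hm P' hpoly.hs)
    have h2: "hpoly ((0 + 1) + e) (\<lambda>x. (- of_real (2 * real m)) * of_real (x \<bullet> i) * P x)"
      by (intro hpoly.hm hpoly.hc hpoly.hl Suc.prems(1) bounded_linear_compose[OF bounded_linear_of_real bounded_linear_inner_left])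
    have hP2: "hpoly (e + 1) P2"
      unfolding P2_def using h1 h2 e1 by (intro hpoly.ha) simp_all
    have F: "frechet_derivative (rat m P) (at x) i = rat (Suc m) P2 x" for x
    proof (cases "x = 0")
      case True then show ?thesis
        using fd_eq[OF rat_deriv0[OF Suc.prems(1,2)]] Suc.prems(3) by (simp add: rat_def)
    next
      case False then show ?thesis
        using fd_eq[OF rat_deriv[OF Suc.prems(1,2) False]] P'(2) by (simp add: rat_def P2_def)
    qed
    have "Ck_on k UNIV (rat (Suc m) P2)"
      using Suc.IH[OF hP2] Suc.prems by simp
    then show ?thesis using F by simp
  qed
  then show ?case using diff by simp
qed



lemma gam_deriv:
  assumes "2 \<le> n"
  shows "((\<lambda>u::real. (max 0 u) ^ n) has_field_derivative (of_nat n * (max 0 u) ^ (n - 1))) (at u)"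
proof -
  consider "u > 0" | "u < 0" | "u = 0" by linarith
  then show ?thesis
  proof cases
    case 1
    have "((\<lambda>u::real. u ^ n) has_field_derivative (of_nat n * u ^ (n - 1))) (at u)"
      using DERIV_pow[of n u UNIV] by simp
    then have "((\<lambda>u::real. (max 0 u) ^ n) has_field_derivative (of_nat n * u ^ (n - 1))) (at u)"
      by (rule has_field_derivative_transform_within_open[of _ _ _ "{0<..}"]) (use 1 in auto)
    then show ?thesis using 1 by simp
  next
    case 2
    have "((\<lambda>u::real. 0) has_field_derivative 0) (at u)" by simp
    then have "((\<lambda>u::real. (max 0 u) ^ n) has_field_derivative 0) (at u)"
      by (rule has_field_derivative_transform_within_open[of _ _ _ "{..<0}"]) (use 2 assms in auto)
    then show ?thesis using 2 assms by (simp add: power_0_left)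
  next
    case 3
    have L: "((\<lambda>h::real. norm h) \<longlongrightarrow> 0) (at 0)"
      by (rule tendsto_norm_zero[OF tendsto_ident_at])
    have "norm (norm ((max 0 (0 + h)) ^ n - (max 0 0) ^ n - h * 0) / norm h) \<le> norm h"
      if "h \<noteq> 0" "norm h < 1" for h :: real
    proof -
      have "\<bar>max 0 h\<bar> \<le> \<bar>h\<bar>" by auto
      then have "\<bar>max 0 h\<bar> ^ n \<le> \<bar>h\<bar> ^ n" by (rule power_mono) simp
      also have "\<bar>h\<bar> ^ n \<le> \<bar>h\<bar> ^ 2"
        using that assms by (intro power_decreasing) auto
      finally have a: "\<bar>max 0 h\<bar> ^ n \<le> \<bar>h\<bar> * \<bar>h\<bar>" by (simp add: power2_eq_square)
      have "norm (norm ((max 0 (0 + h)) ^ n - (max 0 0) ^ n - h * 0) / norm h) = \<bar>max 0 h\<bar> ^ n / \<bar>h\<bar>"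
        using assms by (simp add: power_abs)
      also have "\<dots> \<le> \<bar>h\<bar> * \<bar>h\<bar> / \<bar>h\<bar>" using a by (intro divide_right_mono) auto
      also have "\<dots> = norm h" using that by (simp del: abs_mult_self_eq)
      finally show ?thesis .
    qed
    then have "eventually (\<lambda>h. norm (norm ((max 0 (0 + h)) ^ n - (max 0 0) ^ n - h * 0) / norm h) \<le> norm h) (at (0::real))"
      unfolding eventually_at by (intro exI[of _ 1]) (auto simp: dist_norm)
    then have "((\<lambda>h. norm ((max 0 (0 + h)) ^ n - (max 0 0) ^ n - h * 0) / norm h) \<longlongrightarrow> 0) (at (0::real))"
      by (rule Lim_null_comparison[OF _ L])
    then have "((\<lambda>u::real. (max 0 u) ^ n) has_derivative (\<lambda>h. h * 0)) (at 0)"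
      by (simp add: has_derivative_at bounded_linear_mult_left)
    moreover have "(*) (0::real) = (\<lambda>h. 0)" by auto
    ultimately show ?thesis using 3 assms by (simp add: has_field_derivative_def power_0_left)
  qed
qed

lemma gam_Ck: "Ck_on k UNIV (\<lambda>u::real. (max 0 u) ^ Suc k)"
proof (induction k)
  case 0 then show ?case by (simp add: continuous_on_max continuous_on_const continuous_on_id)
next
  case (Suc k)
  have D: "((\<lambda>u::real. (max 0 u) ^ Suc (Suc k)) has_derivative (*) (of_nat (Suc (Suc k)) * (max 0 u) ^ Suc k)) (at u)" for u
    using gam_deriv[of "Suc (Suc k)" u] unfolding has_field_derivative_def by simp
  have F: "frechet_derivative (\<lambda>u::real. (max 0 u) ^ Suc (Suc k)) (at u) 1 = of_nat (Suc (Suc k)) * (max 0 u) ^ Suc k" for u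
    unfolding fd_eq[OF D] by simp
  have "Ck_on k UNIV (\<lambda>u::real. of_nat (Suc (Suc k)) * (max 0 u) ^ Suc k)"
    by (rule Ck_on_bilinear[OF bounded_bilinear_mult open_UNIV Ck_on_const Suc.IH])
  then show ?case using D F by (auto simp: differentiable_def)
qed

definition beta :: "nat \<Rightarrow> 'e::euclidean_space \<Rightarrow> real \<Rightarrow> 'e \<Rightarrow> real" where
  "beta k p r y = 1 - (max 0 (1 - ((y - p) \<bullet> (y - p)) / r^2)) ^ Suc k"

lemma beta_Ck:
  fixes p :: "'e::euclidean_space"
  shows "Ck_on k U (beta k p r)"
proof -
  have i1: "Ck_on k UNIV (\<lambda>y::'e. y - p)"
    using Ck_on_add[OF open_UNIV Ck_on_id Ck_on_const[of k UNIV "-p"]] by simp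
  have i2: "Ck_on k UNIV (\<lambda>y::'e. (y - p) \<bullet> (y - p))"
    by (rule Ck_on_bilinear[OF bounded_bilinear_inner open_UNIV i1 i1])
  have i3: "Ck_on k UNIV (\<lambda>y::'e. 1 - ((y - p) \<bullet> (y - p)) / r^2)"
    using Ck_on_add[OF open_UNIV Ck_on_const[of k UNIV 1] Ck_on_linear[OF bounded_linear_mult_right[of "- inverse (r^2)"] open_UNIV i2]]
    by (simp add: divide_inverse mult.commute)
  have i4: "Ck_on k UNIV (\<lambda>y::'e. (max 0 (1 - ((y - p) \<bullet> (y - p)) / r^2)) ^ Suc k)"
    by (rule Ck_on_compose[OF gam_Ck open_UNIV i3])
  have "Ck_on k UNIV (beta k p r)"
    using Ck_on_add[OF open_UNIV Ck_on_const[of k UNIV 1] Ck_on_linear[OF bounded_linear_minus[OF bounded_linear_ident] open_UNIV i4]]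
    unfolding beta_def[abs_def] by simp
  then show ?thesis by (rule Ck_on_subset) simp
qed

lemma beta_p: "beta k p r p = 0"
  by (simp add: beta_def)

lemma beta_far: "r \<le> dist y p \<Longrightarrow> 0 < r \<Longrightarrow> beta k p r y = 1"
proof -
  assume a: "r \<le> dist y p" "0 < r"
  have "r^2 \<le> (y - p) \<bullet> (y - p)"
    using a by (simp add: power2_norm_eq_inner[symmetric] dist_norm power_mono)
  then have "1 - ((y - p) \<bullet> (y - p)) / r^2 \<le> 0" using a by (simp add: field_simps)
  then show ?thesis by (simp add: beta_def max_def)
qed

lemma beta_nz: "y \<noteq> p \<Longrightarrow> 0 < r \<Longrightarrow> beta k p r y \<noteq> 0"
proof -
  assume a: "y \<noteq> p" "0 < r"
  have t: "(y - p) \<bullet> (y - p) > 0" using a by simp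
  define u where "u = max 0 (1 - ((y - p) \<bullet> (y - p)) / r^2)"
  have "u < 1" "0 \<le> u" using t a by (auto simp: u_def)
  then have "u ^ Suc k < 1" using power_strict_mono[of u 1 "Suc k"] by simp
  then show ?thesis by (simp add: beta_def u_def[symmetric])
qed



lemma chart_open_image:
  assumes "chart X V \<psi>" "openin X S" "S \<subseteq> V"
  shows "open (\<psi> ` S)"
proof -
  have hm: "homeomorphic_map (subtopology X V) (top_of_set (\<psi> ` V)) \<psi>" and o: "open (\<psi> ` V)"
    using assms(1) by (auto simp: chart_def)
  have "openin (subtopology X V) S"
    using assms(2,3) by (auto simp: openin_subtopology intro!: exI[of _ S])
  then have "openin (top_of_set (\<psi> ` V)) (\<psi> ` S)"
    using homeomorphic_imp_open_map[OF hm] by (simp add: open_map_def)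
  then show ?thesis using o openin_open_trans by blast
qed

lemma chart_inj:
  assumes "chart X V \<psi>"
  shows "inj_on \<psi> V"
proof -
  have hm: "homeomorphic_map (subtopology X V) (top_of_set (\<psi> ` V)) \<psi>" and "openin X V"
    using assms by (auto simp: chart_def)
  then have "V \<subseteq> topspace X" by (simp add: openin_subset)
  then show ?thesis using homeomorphic_imp_injective_map[OF hm] by (simp add: Int_absorb1)
qed

lemma chart_inv_in:
  assumes "chart X V \<psi>" "z \<in> S" "S \<subseteq> V"
  shows "inv_into V \<psi> (\<psi> z) \<in> S"
  using assms chart_inj[OF assms(1)] by (metis inv_into_f_f subsetD)

lemma bump_exists:
  fixes A :: "('m set \<times> ('m \<Rightarrow> 'e::euclidean_space)) set"
  assumes "Ck_manifold k X A" "x0 \<in> topspace X"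
  shows "\<exists>s::'m \<Rightarrow> real. Ck_fun k X A s \<and> (\<forall>x\<in>topspace X. s x = 0 \<longleftrightarrow> x = x0)"
proof -
  have H: "Hausdorff_space X" and At: "Ck_atlas k X A" using assms(1) by (auto simp: Ck_manifold_def)
  have ch: "\<And>U \<phi>. (U, \<phi>) \<in> A \<Longrightarrow> chart X U \<phi>"
   and cov: "(\<Union>(U, \<phi>)\<in>A. U) = topspace X"
   and tr: "\<And>U \<phi> V \<psi>. (U, \<phi>) \<in> A \<Longrightarrow> (V, \<psi>) \<in> A \<Longrightarrow> Ck_on k (\<phi> ` (U \<inter> V)) (\<psi> \<circ> inv_into U \<phi>)"
    using At unfolding Ck_atlas_def by auto
  have "x0 \<in> (\<Union>(U, \<phi>)\<in>A. U)" using cov assms(2) by simp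
  then obtain a where "a \<in> A" "x0 \<in> fst a" by (auto split: prod.splits)
  then obtain U0 \<phi>0 where A0: "(U0, \<phi>0) \<in> A" "x0 \<in> U0" by (metis prod.collapse)
  have c0: "chart X U0 \<phi>0" using ch A0 by blast
  then have oU0: "openin X U0" and oi: "open (\<phi>0 ` U0)"
    and hm: "homeomorphic_map (subtopology X U0) (top_of_set (\<phi>0 ` U0)) \<phi>0"
    by (auto simp: chart_def)
  have U0X: "U0 \<subseteq> topspace X" using oU0 by (simp add: openin_subset)
  define p where "p = \<phi>0 x0"
  obtain r where r: "r > 0" "cball p r \<subseteq> \<phi>0 ` U0"
    using oi A0(2) open_contains_cball unfolding p_def by blast
  obtain g where g: "homeomorphic_maps (subtopology X U0) (top_of_set (\<phi>0 ` U0)) \<phi>0 g"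
    using hm homeomorphic_map_maps by blast
  have gc: "continuous_map (top_of_set (\<phi>0 ` U0)) (subtopology X U0) g"
    and gi: "\<And>x. x \<in> U0 \<Longrightarrow> g (\<phi>0 x) = x"
    using g U0X by (auto simp: homeomorphic_maps_def Int_absorb1)
  define K where "K = g ` cball p r"
  have "compactin (top_of_set (\<phi>0 ` U0)) (cball p r)"
    using r by (simp add: compactin_subtopology)
  then have "compactin (subtopology X U0) K"
    unfolding K_def using gc image_compactin by blast
  then have cK: "compactin X K" and KU: "K \<subseteq> U0" by (auto simp: compactin_subtopology)
  have clK: "closedin X K" using compactin_imp_closedin[OF H cK] .
  have inK: "x \<in> K" if "x \<in> U0" "\<phi>0 x \<in> cball p r" for x
    using that gi unfolding K_def by (metis image_eqI)
  define s where "s x = (if x \<in> U0 then beta k p r (\<phi>0 x) else 1)" for x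
  have zero: "\<forall>x\<in>topspace X. s x = 0 \<longleftrightarrow> x = x0"
  proof
    fix x assume "x \<in> topspace X"
    show "s x = 0 \<longleftrightarrow> x = x0"
    proof
      assume "s x = 0"
      then have "x \<in> U0" "beta k p r (\<phi>0 x) = 0" by (auto simp: s_def split: if_splits)
      then have "\<phi>0 x = p" using beta_nz r by blast
      then show "x = x0" using gi \<open>x \<in> U0\<close> A0(2) p_def by metis
    next
      assume "x = x0" then show "s x = 0" using A0 by (simp add: s_def beta_p p_def)
    qed
  qed
  have "Ck_on k (\<psi> ` V) (s \<circ> inv_into V \<psi>)" if VA: "(V, \<psi>) \<in> A" for V \<psi>
  proof (rule Ck_on_local)
    have cV: "chart X V \<psi>" using ch VA by blast
    then have oV: "openin X V" by (simp add: chart_def)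
    fix y assume "y \<in> \<psi> ` V"
    then obtain x where x: "x \<in> V" "y = \<psi> x" by blast
    have ix: "inv_into V \<psi> y = x" using x chart_inj[OF cV] by simp
    show "\<exists>W. open W \<and> y \<in> W \<and> W \<subseteq> \<psi> ` V \<and> Ck_on k W (s \<circ> inv_into V \<psi>)"
    proof (cases "x \<in> U0")
      case True
      define W where "W = \<psi> ` (V \<inter> U0)"
      have oW: "open W" unfolding W_def
        by (rule chart_open_image[OF cV]) (use oV oU0 in auto)
      have T: "Ck_on k W (\<phi>0 \<circ> inv_into V \<psi>)" unfolding W_def by (rule tr[OF VA A0(1)])
      have "Ck_on k W (\<lambda>y. beta k p r ((\<phi>0 \<circ> inv_into V \<psi>) y))"
        by (rule Ck_on_compose[OF beta_Ck oW T])
      moreover have "beta k p r ((\<phi>0 \<circ> inv_into V \<psi>) y') = (s \<circ> inv_into V \<psi>) y'" if "y' \<in> W" for y'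
      proof -
        obtain z where z: "z \<in> V \<inter> U0" "y' = \<psi> z" using \<open>y' \<in> W\<close> W_def by blast
        have "inv_into V \<psi> y' \<in> V \<inter> U0" using chart_inv_in[OF cV z(1)] z by auto
        then show ?thesis by (simp add: s_def)
      qed
      ultimately have "Ck_on k W (s \<circ> inv_into V \<psi>)" by (rule Ck_on_cong[OF oW, rotated])
      moreover have "y \<in> W" using x True W_def by blast
      moreover have "W \<subseteq> \<psi> ` V" using W_def by blast
      ultimately show ?thesis using oW by blast
    next
      case False
      define W where "W = \<psi> ` (V - K)"
      have oW: "open W" unfolding W_def
        by (rule chart_open_image[OF cV]) (use oV clK in auto)
      have "1 = (s \<circ> inv_into V \<psi>) y'" if "y' \<in> W" for y'
      proof -
        obtain z where z: "z \<in> V - K" "y' = \<psi> z" using \<open>y' \<in> W\<close> W_def by blast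
        have iz: "inv_into V \<psi> y' = z" using z chart_inj[OF cV] by simp
        show ?thesis
        proof (cases "z \<in> U0")
          case True
          then have "\<phi>0 z \<notin> cball p r" using inK z by blast
          then have "r \<le> dist (\<phi>0 z) p" by (simp add: dist_commute)
          then show ?thesis using iz True r by (simp add: s_def beta_far)
        next
          case False then show ?thesis using iz by (simp add: s_def)
        qed
      qed
      then have "Ck_on k W (s \<circ> inv_into V \<psi>)" by (rule Ck_on_cong[OF oW _ Ck_on_const])
      moreover have "y \<in> W" using x False KU W_def by blast
      moreover have "W \<subseteq> \<psi> ` V" using W_def by blast
      ultimately show ?thesis using oW by blast
    qed
  qed
  then have "Ck_fun k X A s" by (auto simp: Ck_fun_def)
  then show ?thesis using zero by blast
qed



lemma hpoly_pow: "bounded_linear L \<Longrightarrow> hpoly n (\<lambda>x. L x ^ n)"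
proof (induction n)
  case 0 then show ?case using hpoly.hc[of 1] by simp
next
  case (Suc n)
  then show ?case using hpoly.hm[OF hpoly.hl[OF Suc.prems] Suc.IH[OF Suc.prems]] by simp
qed

lemma main_generic:
  fixes A :: "('m set \<times> ('m \<Rightarrow> 'e::euclidean_space)) set"
    and f :: "'m \<Rightarrow> 'b::{euclidean_space, real_normed_field}"
  assumes M: "Ck_manifold k X A" and x0: "x0 \<in> topspace X" and f: "Ck_fun k X A f" and f0: "f x0 = 0"
  shows "\<exists>h q. Ck_fun k X A h \<and> zero_set X h = {x0} \<and> Ck_fun k X A q \<and>
                   (\<forall>x\<in>topspace X. f x ^ (4 * k + 4) = h x * q x)"
proof -
  obtain s :: "'m \<Rightarrow> real" where s: "Ck_fun k X A s" "\<forall>x\<in>topspace X. s x = 0 \<longleftrightarrow> x = x0"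
    using bump_exists[OF M x0] by blast
  define N where "N = 4 * k + 4"
  define H :: "'b \<times> real \<Rightarrow> 'b" where "H w = of_real (w \<bullet> w)" for w
  define P :: "'b \<times> real \<Rightarrow> 'b" where "P w = fst w ^ N" for w
  define h where "h x = H (f x, s x)" for x
  define q where "q x = rat 1 P (f x, s x)" for x
  have HC: "Ck_on k UNIV H" unfolding H_def[abs_def] by (rule hpoly_Ck[OF hpoly.hs])
  have PC: "Ck_on k UNIV (rat 1 P)"
    by (rule rat_Ck) (auto simp: P_def[abs_def] N_def intro: hpoly_pow bounded_linear_fst)
  have ch: "\<And>U \<phi>. (U, \<phi>) \<in> A \<Longrightarrow> chart X U \<phi>"
    using M unfolding Ck_manifold_def Ck_atlas_def by auto
  have T: "Ck_on k (\<phi> ` U) (\<lambda>y. (f (inv_into U \<phi> y), s (inv_into U \<phi> y)))"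
   and oo: "open (\<phi> ` U)" if "(U, \<phi>) \<in> A" for U \<phi>
  proof -
    show oo: "open (\<phi> ` U)" using ch[OF that] by (simp add: chart_def)
    have "Ck_on k (\<phi> ` U) (f \<circ> inv_into U \<phi>)" "Ck_on k (\<phi> ` U) (s \<circ> inv_into U \<phi>)"
      using f s that by (auto simp: Ck_fun_def)
    then show "Ck_on k (\<phi> ` U) (\<lambda>y. (f (inv_into U \<phi> y), s (inv_into U \<phi> y)))"
      using Ck_on_pair[OF oo] by (simp add: o_def)
  qed
  have hC: "Ck_fun k X A h"
    unfolding Ck_fun_def h_def o_def using Ck_on_compose[OF HC oo T] by auto
  have qC: "Ck_fun k X A q"
    unfolding Ck_fun_def q_def o_def using Ck_on_compose[OF PC oo T] by auto
  have hz: "h x = 0 \<longleftrightarrow> f x = 0 \<and> s x = 0" for x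
    by (simp only: h_def H_def of_real_eq_0_iff inner_eq_zero_iff) (simp add: zero_prod_def)
  have Z: "zero_set X h = {x0}"
    using s(2) x0 f0 by (auto simp: zero_set_def hz)
  have E: "f x ^ N = h x * q x" for x
  proof (cases "h x = 0")
    case True then show ?thesis using hz N_def by (simp add: power_0_left q_def)
  next
    case False then show ?thesis by (simp add: h_def q_def rat_def H_def P_def)
  qed
  show ?thesis using hC qC Z E N_def by blast
qed

theorem lemma2p2:
  fixes k :: nat and X :: "'m topology" and A :: "('m set \<times> ('m \<Rightarrow> 'e::euclidean_space)) set"
    and x0 :: 'm
  assumes "Ck_manifold k X A"
    and "x0 \<in> topspace X"
  shows "(\<forall>f :: 'm \<Rightarrow> real. Ck_fun k X A f \<and> f x0 = 0 \<longrightarrow>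
            (\<exists>h q. Ck_fun k X A h \<and> zero_set X h = {x0} \<and> Ck_fun k X A q \<and>
                   (\<forall>x\<in>topspace X. f x ^ (4 * k + 4) = h x * q x)))
       \<and> (\<forall>f :: 'm \<Rightarrow> complex. Ck_fun k X A f \<and> f x0 = 0 \<longrightarrow>
            (\<exists>h q. Ck_fun k X A h \<and> zero_set X h = {x0} \<and> Ck_fun k X A q \<and>
                   (\<forall>x\<in>topspace X. f x ^ (4 * k + 4) = h x * q x)))"
  using main_generic[where 'b=real, OF assms] main_generic[where 'b=complex, OF assms] by blast

end
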